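(* Let $\mathcal{M}^c=\langle\mathcal{W},\mathcal{N},\mathcal{V}\rangle$ be the canonical model for $\mathbb{PCL}$ defined in the context. For every formula $F$, every maximal consistent set $X$ and every formula $A\in X$: $F\in X$ if and only if $\mathcal{M}^c,(X,A)\Vdash F$.
   Context: Formulas $\mathcal{L}::=p\mid\bot\mid A\wedge B\mid A\lor B\mid A\to B\mid A>B$. Derivability $\vdash$ is in the axiom system of $\mathbb{PCL}$: classical propositional logic, rules (RCEA) from $A\leftrightarrow B$ infer $(A>C)\leftrightarrow(B>C)$, (RCK) from $A\to B$ infer $(C>A)\to(C>B)$, axioms (ID) $A>A$, (R-And) $(A>B)\wedge(A>C)\to(A>(B\wedge C))$, (CM) $(A>B)\wedge(A>C)\to((A\wedge B)>C)$, (OR) $(A>C)\wedge(B>C)\to((A\lor B)>C)$. A set $S$ is inconsistent if $\vdash(B_1\wedge\dots\wedge B_n)\to\bot$ for some $B_i\in S$; maximal consistent sets are consistent sets with no consistent proper superset. For a maximal consistent set $X$: $X^B=\{C\mid B>C\in X\}$; $A\le_X B$ iff $(A\lor B)>A\in X$. Canonical model: $\mathcal{W}=\{(X,A)\mid X$ maximal consistent, $A\in X\}$; $\mathcal{V}(p)=\{(X,A)\in\mathcal{W}\mid p\in X\}$; for $(X,A),(Y,B)\in\mathcal{W}$, $S_X(Y,B)=\{(Z,C)\in\mathcal{W}\mid X^C\subseteq Z,\ C\le_X B,\ B\notin Z\}\cup\{(Y,B)\}$; $\mathcal{N}(X,A)=\{S_X(Y,B)\mid (Y,B)\in\mathcal{W},\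 X^B\subseteq Y\}$. Forcing in a neighbourhood model $\langle W,N,V\rangle$: atoms via $V$, Boolean connectives classical, and $x\Vdash G>H$ iff for all $\alpha\in N(x)$, if some $y\in\alpha$ forces $G$, then there is $\beta\in N(x)$ with $\beta\subseteq\alpha$ such that some $y\in\beta$ forces $G$ and all $y\in\beta$ force $G\to H$. *)

theory Defs
  imports Main
begin

datatype 'a fm =
    Atom 'a
  | Bot
  | And "'a fm" "'a fm"
  | Or "'a fm" "'a fm"
  | Imp "'a fm" "'a fm"
  | Cond "'a fm" "'a fm"   (* A > B *)

definition Iff :: "'a fm \<Rightarrow> 'a fm \<Rightarrow> 'a fm" where
  "Iff A B = And (Imp A B) (Imp B A)"

text \<open>A formula is a (substitution instance of a) propositional tautology iff it is true
under every Boolean valuation that treats atoms and conditionals A > B as propositional letters.\<close>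

fun peval :: "('a fm \<Rightarrow> bool) \<Rightarrow> 'a fm \<Rightarrow> bool" where
  "peval v (Atom p) = v (Atom p)"
| "peval v Bot = False"
| "peval v (And A B) = (peval v A \<and> peval v B)"
| "peval v (Or A B) = (peval v A \<or> peval v B)"
| "peval v (Imp A B) = (peval v A \<longrightarrow> peval v B)"
| "peval v (Cond A B) = v (Cond A B)"

definition tautology :: "'a fm \<Rightarrow> bool" where
  "tautology A \<longleftrightarrow> (\<forall>v. peval v A)"

inductive derivable :: "'a fm \<Rightarrow> bool" where
  TAUT: "tautology A \<Longrightarrow> derivable A"
| MP: "derivable (Imp A B) \<Longrightarrow> derivable A \<Longrightarrow> derivable B"
| RCEA: "derivable (Iff A B) \<Longrightarrow> derivable (Iff (Cond A C) (Cond B C))"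
| RCK: "derivable (Imp A B) \<Longrightarrow> derivable (Imp (Cond C A) (Cond C B))"
| ID: "derivable (Cond A A)"
| RAnd: "derivable (Imp (And (Cond A B) (Cond A C)) (Cond A (And B C)))"
| CM: "derivable (Imp (And (Cond A B) (Cond A C)) (Cond (And A B) C))"
| OR: "derivable (Imp (And (Cond A C) (Cond B C)) (Cond (Or A B) C))"

fun conjs :: "'a fm list \<Rightarrow> 'a fm" where
  "conjs [] = Imp Bot Bot"
| "conjs [B] = B"
| "conjs (B # Bs) = And B (conjs Bs)"

definition inconsistent :: "'a fm set \<Rightarrow> bool" where
  "inconsistent S \<longleftrightarrow> (\<exists>Bs. Bs \<noteq> [] \<and> set Bs \<subseteq> S \<and> derivable (Imp (conjs Bs) Bot))"

definition consistent :: "'a fm set \<Rightarrow> bool" where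
  "consistent S \<longleftrightarrow> \<not> inconsistent S"

definition maxcons :: "'a fm set \<Rightarrow> bool" where
  "maxcons X \<longleftrightarrow> consistent X \<and> (\<forall>Y. X \<subset> Y \<longrightarrow> \<not> consistent Y)"

definition condset :: "'a fm set \<Rightarrow> 'a fm \<Rightarrow> 'a fm set" where
  "condset X B = {C. Cond B C \<in> X}"   (* X^B *)

definition cle :: "'a fm set \<Rightarrow> 'a fm \<Rightarrow> 'a fm \<Rightarrow> bool" where
  "cle X A B \<longleftrightarrow> Cond (Or A B) A \<in> X"

fun forces :: "('w \<Rightarrow> 'w set set) \<Rightarrow> ('a \<Rightarrow> 'w set) \<Rightarrow> 'w \<Rightarrow> 'a fm \<Rightarrow> bool" where
  "forces N V x (Atom p) = (x \<in> V p)"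
| "forces N V x Bot = False"
| "forces N V x (And A B) = (forces N V x A \<and> forces N V x B)"
| "forces N V x (Or A B) = (forces N V x A \<or> forces N V x B)"
| "forces N V x (Imp A B) = (forces N V x A \<longrightarrow> forces N V x B)"
| "forces N V x (Cond G H) =
     (\<forall>\<alpha>\<in>N x. (\<exists>y\<in>\<alpha>. forces N V y G) \<longrightarrow>
        (\<exists>\<beta>\<in>N x. \<beta> \<subseteq> \<alpha> \<and> (\<exists>y\<in>\<beta>. forces N V y G) \<and> (\<forall>y\<in>\<beta>. forces N V y G \<longrightarrow> forces N V y H)))"

definition canW :: "('a fm set \<times> 'a fm) set" where
  "canW = {(X, A). maxcons X \<and> A \<in> X}"

definition canV :: "'a \<Rightarrow> ('a fm set \<times> 'a fm) set" where
  "canV p = {(X, A) \<in> canW. Atom p \<in> X}"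

definition canS :: "'a fm set \<Rightarrow> ('a fm set \<times> 'a fm) \<Rightarrow> ('a fm set \<times> 'a fm) set" where
  "canS X w = (case w of (Y, B) \<Rightarrow>
     {(Z, C) \<in> canW. condset X C \<subseteq> Z \<and> cle X C B \<and> B \<notin> Z} \<union> {(Y, B)})"

definition canN :: "('a fm set \<times> 'a fm) \<Rightarrow> ('a fm set \<times> 'a fm) set set" where
  "canN w = (case w of (X, A) \<Rightarrow>
     {canS X (Y, B) | Y B. (Y, B) \<in> canW \<and> condset X B \<subseteq> Y})"

end

theory Submission
  imports Defs
begin

lemma peval_conjs: "peval v (conjs Bs) = (\<forall>B\<in>set Bs. peval v B)"
  by (induction Bs rule: conjs.induct) auto

lemma taut_mp:
  assumes "\<forall>P\<in>set Ps. derivable P" "\<forall>v. (\<forall>P\<in>set Ps. peval v P) \<longrightarrow> peval v Q"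
  shows "derivable Q"
  using assms
proof (induction Ps arbitrary: Q)
  case Nil
  then show ?case by (auto simp: tautology_def intro: derivable.TAUT)
next
  case (Cons P Ps)
  have "derivable (Imp P Q)" using Cons.prems by (intro Cons.IH) auto
  then show ?case using Cons.prems by (auto intro: derivable.MP)
qed

lemma mc_closed:
  assumes mc: "maxcons X" and a: "a \<in> X" and Bs: "set Bs \<subseteq> X" and P: "derivable P"
    and sem: "\<forall>v. peval v P \<longrightarrow> (\<forall>B\<in>set Bs. peval v B) \<longrightarrow> peval v C"
  shows "C \<in> X"
proof (rule ccontr)
  assume "C \<notin> X"
  then have "X \<subset> insert C X" by auto
  with mc have "\<not> consistent (insert C X)" by (auto simp: maxcons_def)
  then obtain Cs where Cs: "Cs \<noteq> []" "set Cs \<subseteq> insert C X" "derivable (Imp (conjs Cs) Bot)"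
    by (auto simp: consistent_def inconsistent_def)
  define Es where "Es = a # Bs @ filter (\<lambda>x. x \<noteq> C) Cs"
  have "set Es \<subseteq> X" using a Bs Cs(2) by (auto simp: Es_def)
  moreover have "derivable (Imp (conjs Es) Bot)"
  proof (rule taut_mp[where Ps="[P, Imp (conjs Cs) Bot]"])
    show "\<forall>P\<in>set [P, Imp (conjs Cs) Bot]. derivable P" using P Cs(3) by auto
    show "\<forall>v. (\<forall>P\<in>set [P, Imp (conjs Cs) Bot]. peval v P) \<longrightarrow> peval v (Imp (conjs Es) Bot)"
    proof (intro allI impI)
      fix v assume h: "\<forall>P\<in>set [P, Imp (conjs Cs) Bot]. peval v P"
      show "peval v (Imp (conjs Es) Bot)"
      proof (simp, rule notI)
        assume "peval v (conjs Es)"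
        then have E: "\<forall>B\<in>set Es. peval v B" by (simp add: peval_conjs)
        then have "peval v C" using sem h by (auto simp: Es_def)
        with E have "\<forall>B\<in>set Cs. peval v B" by (auto simp: Es_def)
        then show False using h by (simp add: peval_conjs)
      qed
    qed
  qed
  ultimately have "inconsistent X" unfolding inconsistent_def by (intro exI[of _ Es]) (auto simp: Es_def)
  with mc show False by (auto simp: maxcons_def consistent_def)
qed

lemma mc_taut:
  assumes "maxcons X" "a \<in> X" "set Bs \<subseteq> X" "\<forall>v. (\<forall>B\<in>set Bs. peval v B) \<longrightarrow> peval v C"
  shows "C \<in> X"
proof -
  have "derivable (Imp Bot Bot)" by (rule derivable.TAUT) (simp add: tautology_def)
  then show ?thesis using mc_closed[OF assms(1,2,3), of "Imp Bot Bot" C] assms(4) by blast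
qed

lemma mc_mp:
  assumes "maxcons X" "a \<in> X" "derivable (Imp P Q)" "P \<in> X"
  shows "Q \<in> X"
  using mc_closed[OF assms(1,2), of "[P]" "Imp P Q" Q] assms(3,4) by auto

lemma mc_deriv:
  assumes "maxcons X" "a \<in> X" "derivable P"
  shows "P \<in> X"
  using mc_closed[OF assms(1,2), of "[]" P P] assms(3) by auto

lemma mc_bot:
  assumes "maxcons X"
  shows "Bot \<notin> X"
proof
  assume "Bot \<in> X"
  then have "inconsistent X" unfolding inconsistent_def
    by (intro exI[of _ "[Bot]"]) (auto simp: tautology_def intro: derivable.TAUT)
  with assms show False by (auto simp: maxcons_def consistent_def)
qed

lemma mc_neg:
  assumes mc: "maxcons X" and a: "a \<in> X" and nA: "A \<notin> X"
  shows "Imp A Bot \<in> X"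
proof (rule ccontr)
  assume nN: "Imp A Bot \<notin> X"
  have "X \<subset> insert A X" using nA by auto
  with mc have "\<not> consistent (insert A X)" by (auto simp: maxcons_def)
  then obtain Cs where Cs: "Cs \<noteq> []" "set Cs \<subseteq> insert A X" "derivable (Imp (conjs Cs) Bot)"
    by (auto simp: consistent_def inconsistent_def)
  have "X \<subset> insert (Imp A Bot) X" using nN by auto
  with mc have "\<not> consistent (insert (Imp A Bot) X)" by (auto simp: maxcons_def)
  then obtain Ds where Ds: "Ds \<noteq> []" "set Ds \<subseteq> insert (Imp A Bot) X" "derivable (Imp (conjs Ds) Bot)"
    by (auto simp: consistent_def inconsistent_def)
  define Es where "Es = a # filter (\<lambda>x. x \<noteq> A) Cs @ filter (\<lambda>x. x \<noteq> Imp A Bot) Ds"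
  have "set Es \<subseteq> X" using a Cs(2) Ds(2) by (auto simp: Es_def)
  moreover have "derivable (Imp (conjs Es) Bot)"
  proof (rule taut_mp[where Ps="[Imp (conjs Cs) Bot, Imp (conjs Ds) Bot]"])
    show "\<forall>P\<in>set [Imp (conjs Cs) Bot, Imp (conjs Ds) Bot]. derivable P" using Ds(3) Cs(3) by auto
    show "\<forall>v. (\<forall>P\<in>set [Imp (conjs Cs) Bot, Imp (conjs Ds) Bot]. peval v P) \<longrightarrow> peval v (Imp (conjs Es) Bot)"
    proof (intro allI impI)
      fix v assume h: "\<forall>P\<in>set [Imp (conjs Cs) Bot, Imp (conjs Ds) Bot]. peval v P"
      show "peval v (Imp (conjs Es) Bot)"
      proof (simp, rule notI)
        assume "peval v (conjs Es)"
        then have E: "\<forall>B\<in>set Es. peval v B" by (simp add: peval_conjs)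
        show False
        proof (cases "peval v A")
          case True
          with E have "\<forall>B\<in>set Cs. peval v B" by (auto simp: Es_def)
          then show False using h by (simp add: peval_conjs)
        next
          case False
          with E have "\<forall>B\<in>set Ds. peval v B" by (auto simp: Es_def)
          then show False using h by (simp add: peval_conjs)
        qed
      qed
    qed
  qed
  ultimately have "inconsistent X" unfolding inconsistent_def by (intro exI[of _ Es]) (auto simp: Es_def)
  with mc show False by (auto simp: maxcons_def consistent_def)
qed

lemma mc_And:
  assumes "maxcons X" "a \<in> X"
  shows "And A B \<in> X \<longleftrightarrow> A \<in> X \<and> B \<in> X"
proof
  assume "And A B \<in> X"
  then show "A \<in> X \<and> B \<in> X"
    using mc_taut[OF assms, of "[And A B]" A] mc_taut[OF assms, of "[And A B]" B] by auto
next
  assume "A \<in> X \<and> B \<in> X"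
  then show "And A B \<in> X" using mc_taut[OF assms, of "[A, B]" "And A B"] by auto
qed

lemma mc_Or:
  assumes "maxcons X" "a \<in> X"
  shows "Or A B \<in> X \<longleftrightarrow> A \<in> X \<or> B \<in> X"
proof
  assume h: "Or A B \<in> X"
  show "A \<in> X \<or> B \<in> X"
  proof (rule ccontr)
    assume "\<not> (A \<in> X \<or> B \<in> X)"
    then have "Imp A Bot \<in> X" "Imp B Bot \<in> X" using mc_neg[OF assms] by auto
    then have "Bot \<in> X" using h mc_taut[OF assms, of "[Or A B, Imp A Bot, Imp B Bot]" Bot] by auto
    then show False using mc_bot[OF assms(1)] by auto
  qed
next
  assume "A \<in> X \<or> B \<in> X"
  then show "Or A B \<in> X"
    using mc_taut[OF assms, of "[A]" "Or A B"] mc_taut[OF assms, of "[B]" "Or A B"] by auto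
qed

lemma mc_Imp:
  assumes "maxcons X" "a \<in> X"
  shows "Imp A B \<in> X \<longleftrightarrow> (A \<in> X \<longrightarrow> B \<in> X)"
proof
  assume h: "Imp A B \<in> X"
  then show "A \<in> X \<longrightarrow> B \<in> X" using mc_taut[OF assms, of "[Imp A B, A]" B] by auto
next
  assume h: "A \<in> X \<longrightarrow> B \<in> X"
  show "Imp A B \<in> X"
  proof (cases "A \<in> X")
    case True
    then show ?thesis using h mc_taut[OF assms, of "[B]" "Imp A B"] by auto
  next
    case False
    then have "Imp A Bot \<in> X" using mc_neg[OF assms] by auto
    then show ?thesis using mc_taut[OF assms, of "[Imp A Bot]" "Imp A B"] by auto
  qed
qed

lemma negD:
  assumes "maxcons X" "a \<in> X" "Imp A Bot \<in> X"
  shows "A \<notin> X"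
  using assms mc_Imp[OF assms(1,2)] mc_bot[OF assms(1)] by blast

lemma rck_mem:
  assumes "maxcons X" "a \<in> X" "tautology (Imp A B)" "Cond C A \<in> X"
  shows "Cond C B \<in> X"
  using mc_mp[OF assms(1,2) derivable.RCK[OF derivable.TAUT[OF assms(3)]] assms(4)] .

lemma rcea_mem:
  assumes "maxcons X" "a \<in> X" "tautology (Iff A B)" "Cond A C \<in> X"
  shows "Cond B C \<in> X"
proof -
  have d: "derivable (Iff (Cond A C) (Cond B C))"
    by (rule derivable.RCEA[OF derivable.TAUT[OF assms(3)]])
  show ?thesis
    using mc_closed[OF assms(1,2), of "[Cond A C]" "Iff (Cond A C) (Cond B C)" "Cond B C"] d assms(4)
    by (auto simp: Iff_def)
qed

lemma id_mem:
  assumes "maxcons X" "a \<in> X"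
  shows "Cond A A \<in> X"
  using mc_deriv[OF assms derivable.ID] .

lemma rand_mem:
  assumes "maxcons X" "a \<in> X" "Cond A B \<in> X" "Cond A C \<in> X"
  shows "Cond A (And B C) \<in> X"
  using mc_mp[OF assms(1,2) derivable.RAnd] assms mc_And[OF assms(1,2)] by auto

lemma cm_mem:
  assumes "maxcons X" "a \<in> X" "Cond A B \<in> X" "Cond A C \<in> X"
  shows "Cond (And A B) C \<in> X"
  using mc_mp[OF assms(1,2) derivable.CM] assms mc_And[OF assms(1,2)] by auto

lemma or_mem:
  assumes "maxcons X" "a \<in> X" "Cond A C \<in> X" "Cond B C \<in> X"
  shows "Cond (Or A B) C \<in> X"
  using mc_mp[OF assms(1,2) derivable.OR] assms mc_And[OF assms(1,2)] by auto

lemma cond_conjs: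
  assumes mc: "maxcons X" "a \<in> X"
  shows "(\<forall>c\<in>set Cs. Cond D c \<in> X) \<Longrightarrow> Cond D (conjs Cs) \<in> X"
proof (induction Cs rule: conjs.induct)
  case 1
  show ?case using rck_mem[OF mc _ id_mem[OF mc, of D], of "Imp Bot Bot"]
    by (simp add: tautology_def)
next
  case (2 B)
  then show ?case by simp
next
  case (3 B v va)
  then show ?case using rand_mem[OF mc] by simp
qed

lemma lindenbaum:
  assumes "consistent S"
  shows "\<exists>M. S \<subseteq> M \<and> maxcons M"
proof -
  let ?A = "{Y. S \<subseteq> Y \<and> consistent Y}"
  have "\<exists>M\<in>?A. \<forall>Y\<in>?A. M \<subseteq> Y \<longrightarrow> Y = M"
  proof (rule subset_Zorn_nonempty)
    show "?A \<noteq> {}" using assms by auto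
    fix C assume C: "C \<noteq> {}" "subset.chain ?A C"
    obtain Y0 where "Y0 \<in> C" using C(1) by blast
    then have "S \<subseteq> Y0" using C(2) by (auto simp: subset.chain_def)
    then have "S \<subseteq> \<Union>C" using \<open>Y0 \<in> C\<close> by blast
    moreover have "consistent (\<Union>C)"
      unfolding consistent_def inconsistent_def
    proof
      assume "\<exists>Bs. Bs \<noteq> [] \<and> set Bs \<subseteq> \<Union>C \<and> derivable (Imp (conjs Bs) Bot)"
      then obtain Bs where Bs: "Bs \<noteq> []" "set Bs \<subseteq> \<Union>C" "derivable (Imp (conjs Bs) Bot)" by blast
      obtain B where "B \<in> C" "set Bs \<subseteq> B"
        using finite_subset_Union_chain[OF _ Bs(2) C(1) C(2)] by blast
      then have "inconsistent B" using Bs unfolding inconsistent_def by blast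
      moreover have "consistent B" using \<open>B \<in> C\<close> C by (auto simp: subset.chain_def)
      ultimately show False by (simp add: consistent_def)
    qed
    ultimately show "\<Union>C \<in> ?A" by simp
  qed
  then obtain M where M: "S \<subseteq> M" "consistent M" "\<forall>Y. S \<subseteq> Y \<and> consistent Y \<longrightarrow> M \<subseteq> Y \<longrightarrow> Y = M"
    by auto
  have "maxcons M" unfolding maxcons_def
  proof (intro conjI allI impI)
    show "consistent M" by fact
    fix Y assume "M \<subset> Y"
    then show "\<not> consistent Y" using M by blast
  qed
  with M show ?thesis by blast
qed

lemma cond_consistent:
  assumes mc: "maxcons X" "a \<in> X" and nc: "Cond D K \<notin> X"
  shows "consistent (condset X D \<union> {Imp K Bot})"
  unfolding consistent_def inconsistent_def
proof
  assume "\<exists>Bs. Bs \<noteq> [] \<and> set Bs \<subseteq> condset X D \<union> {Imp K Bot} \<and> derivable (Imp (conjs Bs) Bot)"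
  then obtain Bs where Bs: "set Bs \<subseteq> condset X D \<union> {Imp K Bot}" "derivable (Imp (conjs Bs) Bot)" by blast
  define Cs where "Cs = filter (\<lambda>x. x \<noteq> Imp K Bot) Bs"
  have "derivable (Imp (conjs Cs) K)"
  proof (rule taut_mp[where Ps="[Imp (conjs Bs) Bot]"])
    show "\<forall>P\<in>set [Imp (conjs Bs) Bot]. derivable P" using Bs by auto
    show "\<forall>v. (\<forall>P\<in>set [Imp (conjs Bs) Bot]. peval v P) \<longrightarrow> peval v (Imp (conjs Cs) K)"
      by (auto simp: peval_conjs Cs_def)
  qed
  moreover have "Cond D (conjs Cs) \<in> X"
    using cond_conjs[OF mc, of Cs D] Bs(1) by (auto simp: Cs_def condset_def)
  ultimately have "Cond D K \<in> X" using mc_mp[OF mc derivable.RCK] by blast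
  with nc show False by simp
qed

lemma D1:
  assumes mc: "maxcons X" "a \<in> X" and h: "Cond G H \<in> X"
  shows "Cond (Or G B) (Imp G H) \<in> X"
proof -
  have h1: "Cond G (Imp G H) \<in> X" by (rule rck_mem[OF mc _ h]) (simp add: tautology_def)
  have h2: "Cond (And B (Imp G Bot)) (Imp G H) \<in> X"
    by (rule rck_mem[OF mc _ id_mem[OF mc]]) (simp add: tautology_def)
  have h3: "Cond (Or G (And B (Imp G Bot))) (Imp G H) \<in> X" by (rule or_mem[OF mc h1 h2])
  show ?thesis by (rule rcea_mem[OF mc _ h3]) (auto simp: tautology_def Iff_def)
qed

lemma Da:
  assumes mc: "maxcons X" "a \<in> X" and h: "Cond G H \<in> X" and P: "Cond (Or G B) (Imp G B) \<in> X"
  shows "Cond B (Imp G H) \<in> X"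
proof -
  have q0: "Cond (Or G B) (And (Imp G B) (Or G B)) \<in> X" by (rule rand_mem[OF mc P id_mem[OF mc]])
  have q: "Cond (Or G B) B \<in> X" by (rule rck_mem[OF mc _ q0]) (auto simp: tautology_def)
  have "Cond (And (Or G B) B) (Imp G H) \<in> X" by (rule cm_mem[OF mc q D1[OF mc h]])
  then show ?thesis by (rule rcea_mem[OF mc, rotated]) (auto simp: tautology_def Iff_def)
qed

lemma Db:
  assumes mc: "maxcons X" "a \<in> X" and P: "Cond (Or G B) (Imp G B) \<in> X" and c: "cle X E B"
  shows "Cond E (Imp G B) \<in> X"
proof -
  have r1: "Cond (And E (And (Imp G Bot) (Imp B Bot))) (Imp G B) \<in> X"
    by (rule rck_mem[OF mc _ id_mem[OF mc]]) (auto simp: tautology_def)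
  have r2: "Cond (Or (Or G B) (And E (And (Imp G Bot) (Imp B Bot)))) (Imp G B) \<in> X"
    by (rule or_mem[OF mc P r1])
  have r3: "Cond (Or (Or E B) G) (Imp G B) \<in> X"
    by (rule rcea_mem[OF mc _ r2]) (auto simp: tautology_def Iff_def)
  have r4: "Cond (Or (Or E B) G) (And (Or (Or E B) G) (Imp G B)) \<in> X"
    by (rule rand_mem[OF mc id_mem[OF mc] r3])
  have r4': "Cond (Or (Or E B) G) (Or E B) \<in> X"
    by (rule rck_mem[OF mc _ r4]) (auto simp: tautology_def)
  have r5: "Cond (And (Or (Or E B) G) (Or E B)) (Imp G B) \<in> X" by (rule cm_mem[OF mc r4' r3])
  have r5': "Cond (Or E B) (Imp G B) \<in> X"
    by (rule rcea_mem[OF mc _ r5]) (auto simp: tautology_def Iff_def)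
  have c': "Cond (Or E B) E \<in> X" using c by (simp add: cle_def)
  have r6: "Cond (And (Or E B) E) (Imp G B) \<in> X" by (rule cm_mem[OF mc c' r5'])
  show ?thesis by (rule rcea_mem[OF mc _ r6]) (auto simp: tautology_def Iff_def)
qed

lemma Dc:
  assumes mc: "maxcons X" "a \<in> X"
  shows "cle X (Or G B) B"
  unfolding cle_def
  by (rule rcea_mem[OF mc _ id_mem[OF mc, of "Or G B"]]) (auto simp: tautology_def Iff_def)

lemma Dd:
  assumes mc: "maxcons X" "a \<in> X" and c: "cle X E (Or G B)"
  shows "cle X E B"
proof -
  have h: "Cond (Or E (Or G B)) E \<in> X" using c by (simp add: cle_def)
  have h2: "Cond (Or E (Or G B)) (Or E B) \<in> X" by (rule rck_mem[OF mc _ h]) (simp add: tautology_def)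
  have h3: "Cond (And (Or E (Or G B)) (Or E B)) E \<in> X" by (rule cm_mem[OF mc h2 h])
  show ?thesis unfolding cle_def
    by (rule rcea_mem[OF mc _ h3]) (auto simp: tautology_def Iff_def)
qed

lemma canS_mem:
  "(W, E) \<in> canS X (Y, B) \<longleftrightarrow>
     ((W, E) \<in> canW \<and> condset X E \<subseteq> W \<and> cle X E B \<and> B \<notin> W) \<or> (W, E) = (Y, B)"
  by (auto simp: canS_def)

lemma canS_W: "(Y, B) \<in> canW \<Longrightarrow> w \<in> canS X (Y, B) \<Longrightarrow> w \<in> canW"
  by (auto simp: canS_def)

lemma canW_iff: "(X, A) \<in> canW \<longleftrightarrow> maxcons X \<and> A \<in> X"
  by (simp add: canW_def)

lemma canN_iff: "\<alpha> \<in> canN (X, A) \<longleftrightarrow> (\<exists>Y B. \<alpha> = canS X (Y, B) \<and> (Y, B) \<in> canW \<and> condset X B \<subseteq> Y)"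
  by (auto simp: canN_def)

lemma truth:
  fixes F :: "'a fm"
  shows "\<forall>X A. maxcons X \<and> A \<in> X \<longrightarrow> (F \<in> X \<longleftrightarrow> forces canN canV (X, A) F)"
proof (induction F)
  case (Atom p)
  then show ?case by (auto simp: canV_def canW_def)
next
  case Bot
  then show ?case using mc_bot by auto
next
  case (And F1 F2)
  then show ?case using mc_And by fastforce
next
  case (Or F1 F2)
  then show ?case using mc_Or by fastforce
next
  case (Imp F1 F2)
  then show ?case using mc_Imp by fastforce
next
  case (Cond G H)
  have IHG: "forces canN canV w G \<longleftrightarrow> G \<in> fst w" if "w \<in> canW" for w
    using Cond.IH(1) that by (cases w) (auto simp: canW_def)
  have IHH: "forces canN canV w H \<longleftrightarrow> H \<in> fst w" if "w \<in> canW" for w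
    using Cond.IH(2) that by (cases w) (auto simp: canW_def)
  show ?case
  proof (intro allI impI)
    fix X :: "'a fm set" and A :: "'a fm" assume "maxcons X \<and> A \<in> X"
    then have mc: "maxcons X" "A \<in> X" by auto
    show "Cond G H \<in> X \<longleftrightarrow> forces canN canV (X, A) (Cond G H)"
    proof
      assume GH: "Cond G H \<in> X"
      show "forces canN canV (X, A) (Cond G H)"
        unfolding forces.simps
      proof (intro ballI impI)
        fix \<alpha> assume a: "\<alpha> \<in> canN (X, A)" and ex: "\<exists>y\<in>\<alpha>. forces canN canV y G"
        obtain Y B where al: "\<alpha> = canS X (Y, B)" "(Y, B) \<in> canW" "condset X B \<subseteq> Y"
          using a by (auto simp: canN_iff)
        have aW: "w \<in> canW" if "w \<in> \<alpha>" for w using canS_W[OF al(2)] that al(1) by blast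
        show "\<exists>\<beta>\<in>canN (X, A). \<beta> \<subseteq> \<alpha> \<and> (\<exists>y\<in>\<beta>. forces canN canV y G) \<and>
                (\<forall>y\<in>\<beta>. forces canN canV y G \<longrightarrow> forces canN canV y H)"
        proof (cases "Cond (Or G B) (Imp G B) \<in> X")
          case True
          have all: "forces canN canV y H" if y: "y \<in> \<alpha>" "forces canN canV y G" for y
          proof -
            obtain W E where yWE: "y = (W, E)" by (cases y)
            have yW: "(W, E) \<in> canW" using aW y yWE by auto
            then have mW: "maxcons W" "E \<in> W" by (auto simp: canW_def)
            have GW: "G \<in> W" using IHG[OF yW] y yWE by simp
            have "H \<in> W"
            proof (cases "(W, E) = (Y, B)")
              case True
              have "Cond B (Imp G H) \<in> X" by (rule Da[OF mc GH \<open>Cond (Or G B) (Imp G B) \<in> X\<close>])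
              then have "Imp G H \<in> W" using al(3) True by (auto simp: condset_def)
              then show ?thesis using GW mc_Imp[OF mW] by auto
            next
              case False
              then have h: "condset X E \<subseteq> W" "cle X E B" "B \<notin> W"
                using y(1) yWE al(1) canS_mem[of W E X Y B] by auto
              have "Cond E (Imp G B) \<in> X" by (rule Db[OF mc \<open>Cond (Or G B) (Imp G B) \<in> X\<close> h(2)])
              then have "Imp G B \<in> W" using h(1) by (auto simp: condset_def)
              then show ?thesis using GW h(3) mc_Imp[OF mW] by auto
            qed
            then show ?thesis using IHH[OF yW] yWE by simp
          qed
          show ?thesis using a ex all by blast
        next
          case False
          obtain Y' where Y': "condset X (Or G B) \<union> {Imp (Imp G B) Bot} \<subseteq> Y'" "maxcons Y'"
            using lindenbaum[OF cond_consistent[OF mc False]] by blast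
          have "Imp (Imp G B) Bot \<in> Y'" using Y' by auto
          then have nGB: "Imp G B \<notin> Y'" using negD[OF Y'(2)] by blast
          have "Imp G B \<in> Y'" if "G \<notin> Y'" 
            using that mc_Imp[OF Y'(2) \<open>Imp (Imp G B) Bot \<in> Y'\<close>] by auto
          then have GY: "G \<in> Y'" using nGB by blast
          have BY: "B \<notin> Y'" using nGB GY mc_Imp[OF Y'(2) \<open>Imp (Imp G B) Bot \<in> Y'\<close>] by auto
          have OY: "Or G B \<in> Y'" using GY mc_Or[OF Y'(2) GY] by auto
          have "Imp G H \<in> Y'" using D1[OF mc GH, of B] Y'(1) by (auto simp: condset_def)
          then have HY: "H \<in> Y'" using GY mc_Imp[OF Y'(2) GY] by auto
          have Y'W: "(Y', Or G B) \<in> canW" using Y'(2) OY by (simp add: canW_def)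
          define \<beta> where "\<beta> = canS X (Y', Or G B)"
          have bN: "\<beta> \<in> canN (X, A)" unfolding canN_iff \<beta>_def using Y'W Y'(1) by blast
          have sub: "\<beta> \<subseteq> \<alpha>"
          proof
            fix w assume w: "w \<in> \<beta>"
            obtain W E where wWE: "w = (W, E)" by (cases w)
            show "w \<in> \<alpha>"
            proof (cases "(W, E) = (Y', Or G B)")
              case True
              then show ?thesis unfolding al(1) wWE canS_mem
                using Y'W Y'(1) Dc[OF mc, of G B] BY by auto
            next
              case False
              then have h: "(W, E) \<in> canW" "condset X E \<subseteq> W" "cle X E (Or G B)" "Or G B \<notin> W"
                using w wWE \<beta>_def canS_mem[of W E X Y' "Or G B"] by auto
              have "B \<notin> W" using h(1,4) mc_Or by (auto simp: canW_def)
              then show ?thesis unfolding al(1) wWE canS_mem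
                using h Dd[OF mc h(3)] by auto
            qed
          qed
          have exb: "\<exists>y\<in>\<beta>. forces canN canV y G"
            using IHG[OF Y'W] GY by (auto simp: \<beta>_def canS_def)
          have allb: "forces canN canV y H" if y: "y \<in> \<beta>" "forces canN canV y G" for y
          proof -
            obtain W E where yWE: "y = (W, E)" by (cases y)
            have yW: "(W, E) \<in> canW" using canS_W[OF Y'W] y yWE \<beta>_def by auto
            have GW: "G \<in> W" using IHG[OF yW] y yWE by simp
            have "H \<in> W"
            proof (cases "(W, E) = (Y', Or G B)")
              case True
              then show ?thesis using HY by simp
            next
              case False
              then have "Or G B \<notin> W" using y yWE \<beta>_def canS_mem[of W E X Y' "Or G B"] by auto
              then show ?thesis using GW yW mc_Or by (auto simp: canW_def)
            qed
            then show ?thesis using IHH[OF yW] yWE by simp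
          qed
          show ?thesis using bN sub exb allb by blast
        qed
      qed
    next
      assume F: "forces canN canV (X, A) (Cond G H)"
      show "Cond G H \<in> X"
      proof (rule ccontr)
        assume nGH: "Cond G H \<notin> X"
        obtain Y where Y: "condset X G \<union> {Imp H Bot} \<subseteq> Y" "maxcons Y"
          using lindenbaum[OF cond_consistent[OF mc nGH]] by blast
        have GY: "G \<in> Y" using Y id_mem[OF mc, of G] by (auto simp: condset_def)
        have HY: "H \<notin> Y" using Y negD[OF Y(2) GY] by auto
        have YW: "(Y, G) \<in> canW" using Y(2) GY by (simp add: canW_def)
        define \<alpha> where "\<alpha> = canS X (Y, G)"
        have aN: "\<alpha> \<in> canN (X, A)" unfolding canN_iff \<alpha>_def using YW Y(1) by blast
        have "\<exists>y\<in>\<alpha>. forces canN canV y G"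
          using IHG[OF YW] GY by (auto simp: \<alpha>_def canS_def)
        then obtain \<beta> where b: "\<beta> \<in> canN (X, A)" "\<beta> \<subseteq> \<alpha>" "\<exists>y\<in>\<beta>. forces canN canV y G"
          "\<forall>y\<in>\<beta>. forces canN canV y G \<longrightarrow> forces canN canV y H"
        proof -
          have "\<forall>\<alpha>\<in>canN (X, A). (\<exists>y\<in>\<alpha>. forces canN canV y G) \<longrightarrow>
            (\<exists>\<beta>\<in>canN (X, A). \<beta> \<subseteq> \<alpha> \<and> (\<exists>y\<in>\<beta>. forces canN canV y G) \<and>
               (\<forall>y\<in>\<beta>. forces canN canV y G \<longrightarrow> forces canN canV y H))"
            using F by simp
          then show ?thesis using aN \<open>\<exists>y\<in>\<alpha>. forces canN canV y G\<close> that by blast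
        qed
        then obtain y where y: "y \<in> \<beta>" "forces canN canV y G" by blast
        obtain W E where yWE: "y = (W, E)" by (cases y)
        have ya: "(W, E) \<in> \<alpha>" using y yWE b(2) by auto
        have yW: "(W, E) \<in> canW" using canS_W[OF YW] ya \<alpha>_def by auto
        have GW: "G \<in> W" using IHG[OF yW] y yWE by simp
        have "(W, E) = (Y, G)" using ya GW unfolding \<alpha>_def canS_mem by auto
        moreover have "H \<in> W" using b(4) y yWE IHH[OF yW] by auto
        ultimately show False using HY by simp
      qed
    qed
  qed
qed

theorem mainTheorem3:
  fixes F A :: "'a fm" and X :: "'a fm set"
  assumes "maxcons X" and "A \<in> X"
  shows "F \<in> X \<longleftrightarrow> forces canN canV (X, A) F"
  using truth assms by blast

end
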